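(* Let $A\in\mathbb{R}^{m\times m}$ and $C\in\mathbb{R}^{n\times n}$ be symmetric and $B\in\mathbb{R}^{n\times m}$, with $\mu I\preceq A\preceq LI$ for some $0<\mu\le L$, $\|B\|_2\le L$, $\|C\|_2\le L$, and $C+BA^{-1}B^\top\succ0$. Let $r>0$ and $M=\begin{pmatrix}-C & -B\\ rB^\top & -rA\end{pmatrix}$. Let $\lambda=\lambda_0+i\lambda_1$ ($\lambda_0,\lambda_1\in\mathbb{R}$) be any eigenvalue of $M$. Then: (1) $|\lambda_1|\le\sqrt{r}\,L$; (2) if $\lambda_1\neq0$, then $\lambda_0\le-\frac{\mu(r-\kappa)}{2}$; (3) if $r\ge1$, then $\lambda_0^2+\lambda_1^2\le\|M\|_2^2\le4r^2L^2$; (4) if $r>\kappa$ and $\lambda_1=0$, then $\lambda_0\le-\mu_x$; (5) if $r>\kappa$ (and $\mu_x>0$), then $\lambda_0<0$.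
   Context: $\kappa=L/\mu$ and $\mu_x=\min\{L,\lambda_{\min}(C+BA^{-1}B^\top)\}$. *)

theory Defs
  imports "HOL-Analysis.Analysis"
begin

definition spec_norm :: "real^'n^'m \<Rightarrow> real" where
  "spec_norm M = onorm (\<lambda>x. M *v x)"

definition cmat :: "real^'n^'m \<Rightarrow> complex^'n^'m" where
  "cmat M = (\<chi> i j. complex_of_real (M $ i $ j))"

definition is_eigenvalue :: "real^'n^'n \<Rightarrow> complex \<Rightarrow> bool" where
  "is_eigenvalue M lam \<longleftrightarrow> (\<exists>v. v \<noteq> 0 \<and> cmat M *v v = lam *s v)"

definition lambda_min :: "real^'n^'n \<Rightarrow> real" where
  "lambda_min S = Min {t. \<exists>v. v \<noteq> 0 \<and> S *v v = t *s v}"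

definition psd_le :: "real^'n^'n \<Rightarrow> real^'n^'n \<Rightarrow> bool" where
  "psd_le X Y \<longleftrightarrow> (\<forall>x. x \<bullet> (X *v x) \<le> x \<bullet> (Y *v x))"

definition pos_def :: "real^'n^'n \<Rightarrow> bool" where
  "pos_def X \<longleftrightarrow> (\<forall>x. x \<noteq> 0 \<longrightarrow> 0 < x \<bullet> (X *v x))"

definition blockM :: "real^'m^'m \<Rightarrow> real^'m^'n \<Rightarrow> real^'n^'n \<Rightarrow> real \<Rightarrow> real^('n+'m)^('n+'m)" where
  "blockM A B C r = (\<chi> i j. case (i, j) of
      (Inl p, Inl q) \<Rightarrow> - (C $ p $ q)
    | (Inl p, Inr q) \<Rightarrow> - (B $ p $ q)
    | (Inr p, Inl q) \<Rightarrow> r * (B $ q $ p)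
    | (Inr p, Inr q) \<Rightarrow> - r * (A $ p $ q))"

end

theory Submission
  imports Defs
begin


definition xp :: "real^(('n::finite)+('m::finite)) \<Rightarrow> real^'n" where "xp z = (\<chi> p. z $ Inl p)"
definition yp :: "real^(('n::finite)+('m::finite)) \<Rightarrow> real^'m" where "yp z = (\<chi> q. z $ Inr q)"

lemma sum_Plus_UNIV: "(\<Sum>i\<in>(UNIV::('a::finite+'b::finite) set). g i) = (\<Sum>p\<in>UNIV. g (Inl p)) + (\<Sum>q\<in>UNIV. g (Inr q))"
  using sum.Plus[of "UNIV::'a set" "UNIV::'b set" g] by (simp add: o_def)

lemma blockM_xp: "xp (blockM A B C r *v z) = - (C *v xp z) - B *v yp z"
  by (simp add: vec_eq_iff xp_def yp_def matrix_vector_mult_def blockM_def sum_Plus_UNIV sum_negf algebra_simps)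

lemma blockM_yp: "yp (blockM A B C r *v z) = r *s (transpose B *v xp z) - r *s (A *v yp z)"
  by (simp add: vec_eq_iff xp_def yp_def matrix_vector_mult_def blockM_def sum_Plus_UNIV transpose_def
      sum_distrib_left sum_negf algebra_simps)

lemma inner_split: "z \<bullet> w = xp z \<bullet> xp w + yp z \<bullet> yp w"
  by (simp add: inner_vec_def xp_def yp_def sum_Plus_UNIV)

lemma split_zero: "z = 0 \<longleftrightarrow> xp z = 0 \<and> yp z = 0"
  apply (auto simp: xp_def yp_def vec_eq_iff)
  by (metis sum.exhaust)

lemma xp_lin: "xp (a *s z - b *s w) = a *s xp z - b *s xp w" "xp (a *s z + b *s w) = a *s xp z + b *s xp w"
  "yp (a *s z - b *s w) = a *s yp z - b *s yp w" "yp (a *s z + b *s w) = a *s yp z + b *s yp w"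
  by (simp_all add: vec_eq_iff xp_def yp_def)



lemma eig_real:
  assumes "is_eigenvalue M lam"
  shows "\<exists>p q. (p \<noteq> 0 \<or> q \<noteq> 0) \<and> M *v p = Re lam *s p - Im lam *s q \<and> M *v q = Im lam *s p + Re lam *s q"
proof -
  obtain v where v0: "v \<noteq> 0" and ev: "cmat M *v v = lam *s v" using assms is_eigenvalue_def by blast
  define p where "p = (\<chi> i. Re (v$i))"
  define q where "q = (\<chi> i. Im (v$i))"
  have c: "(cmat M *v v) $ i = (\<Sum>j\<in>UNIV. complex_of_real (M$i$j) * v$j)" for i
    by (simp add: matrix_vector_mult_def cmat_def)
  have e: "(cmat M *v v) $ i = lam * v$i" for i using ev by (simp add: vec_eq_iff)
  have 1: "M *v p = Re lam *s p - Im lam *s q"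
  proof -
    have "(M *v p)$i = (Re lam *s p - Im lam *s q)$i" for i
    proof -
      have "(M *v p)$i = Re (\<Sum>j\<in>UNIV. complex_of_real (M$i$j) * v$j)"
        by (simp add: Re_sum matrix_vector_mult_def p_def)
      also have "\<dots> = Re ((cmat M *v v) $ i)" by (simp only: c)
      also have "\<dots> = Re (lam * v$i)" using e by simp
      finally show ?thesis by (simp add: p_def q_def)
    qed
    then show ?thesis by (simp add: vec_eq_iff)
  qed
  have 2: "M *v q = Im lam *s p + Re lam *s q"
  proof -
    have "(M *v q)$i = (Im lam *s p + Re lam *s q)$i" for i
    proof -
      have "(M *v q)$i = Im (\<Sum>j\<in>UNIV. complex_of_real (M$i$j) * v$j)"
        by (simp add: Im_sum matrix_vector_mult_def q_def)
      also have "\<dots> = Im ((cmat M *v v) $ i)" by (simp only: c)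
      also have "\<dots> = Im (lam * v$i)" using e by simp
      finally show ?thesis by (simp add: p_def q_def)
    qed
    then show ?thesis by (simp add: vec_eq_iff)
  qed
  have "p \<noteq> 0 \<or> q \<noteq> 0"
  proof (rule ccontr)
    assume "\<not> ?thesis"
    then have "\<forall>i. Re (v$i) = 0 \<and> Im (v$i) = 0" by (simp add: p_def q_def vec_eq_iff)
    then have "v = 0" by (simp add: vec_eq_iff complex_eq_iff)
    with v0 show False by simp
  qed
  with 1 2 show ?thesis by blast
qed

lemma sym_dot: "transpose A = A \<Longrightarrow> (x::real^'n) \<bullet> (A *v y) = y \<bullet> (A *v x)"
  by (metis dot_lmul_matrix inner_commute vector_transpose_matrix)

lemma tr_dot: "(x::real^'m) \<bullet> (B *v y) = (transpose B *v x) \<bullet> y"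
  by (metis dot_lmul_matrix transpose_transpose vector_transpose_matrix)

lemma scal_mat: "((c::real) *\<^sub>R mat 1) *v x = c *s (x::real^'n)"
proof -
  have "((c::real) *\<^sub>R mat 1) *v x = c *s (mat 1 *v x)"
    by (simp add: vec_eq_iff matrix_vector_mult_def sum_distrib_left mult.assoc)
  then show ?thesis by simp
qed

lemma psd_lower: "psd_le (c *\<^sub>R mat 1) A \<Longrightarrow> c * (x \<bullet> x) \<le> x \<bullet> (A *v x)"
  unfolding psd_le_def by (metis scal_mat inner_scaleR_right scalar_mult_eq_scaleR)

lemma psd_upper: "psd_le A (c *\<^sub>R mat 1) \<Longrightarrow> x \<bullet> (A *v x) \<le> c * (x \<bullet> x)"
  unfolding psd_le_def by (metis scal_mat inner_scaleR_right scalar_mult_eq_scaleR)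

lemma spec_bound: "spec_norm B \<le> L \<Longrightarrow> norm (B *v y) \<le> L * norm y"
  unfolding spec_norm_def
  by (meson matrix_vector_mul_bounded_linear mult_right_mono norm_ge_zero onorm order_trans)

lemma quad_lower:
  assumes "spec_norm C \<le> L" shows "- L * (x \<bullet> x) \<le> x \<bullet> (C *v x)"
proof -
  have "\<bar>x \<bullet> (C *v x)\<bar> \<le> norm x * norm (C *v x)" by (rule Cauchy_Schwarz_ineq2)
  also have "\<dots> \<le> norm x * (L * norm x)" by (simp add: spec_bound assms mult_left_mono)
  also have "\<dots> = L * (x \<bullet> x)" by (simp add: power2_eq_square[symmetric] power2_norm_eq_inner)
  finally show ?thesis by linarith
qed

lemma tr_bound:
  assumes "spec_norm B \<le> L" shows "norm (transpose B *v x) \<le> L * norm x"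
proof -
  let ?w = "transpose B *v x"
  have "norm ?w ^ 2 = x \<bullet> (B *v ?w)" by (simp add: tr_dot power2_norm_eq_inner)
  also have "\<dots> \<le> norm x * norm (B *v ?w)" by (rule norm_cauchy_schwarz)
  also have "\<dots> \<le> norm x * (L * norm ?w)" by (simp add: spec_bound assms mult_left_mono)
  finally have "norm ?w * norm ?w \<le> (L * norm x) * norm ?w" by (simp add: power2_eq_square algebra_simps)
  moreover have "0 \<le> L" using assms onorm_pos_le[OF matrix_vector_mul_bounded_linear[of B]]
    unfolding spec_norm_def by linarith
  ultimately show ?thesis
    by (cases "norm ?w = 0") (auto intro: mult_right_le_imp_le)
qed



lemma sym_bound:
  fixes A :: "real^'m^'m"
  assumes symA: "transpose A = A" and lo: "\<And>z. 0 \<le> z \<bullet> (A *v z)"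
    and up: "\<And>z. z \<bullet> (A *v z) \<le> L * (z \<bullet> z)" and L0: "0 \<le> L"
  shows "norm (A *v y) \<le> L * norm y"
proof (cases "A *v y = 0 \<or> y = 0")
  case True
  then show ?thesis using L0 by auto
next
  case False
  then have ny: "norm y > 0" and nA: "norm (A *v y) > 0" by auto
  define u where "u = (norm y / norm (A *v y)) *\<^sub>R (A *v y)"
  have nu: "norm u = norm y" using nA by (simp add: u_def)
  have uA: "u \<bullet> (A *v y) = norm y * norm (A *v y)"
    using nA by (simp add: u_def power2_eq_square[symmetric] power2_norm_eq_inner[symmetric]) (simp add: power2_eq_square)
  have key: "(u + y) \<bullet> (A *v (u + y)) - (u - y) \<bullet> (A *v (u - y)) = 4 * (u \<bullet> (A *v y))"
    using sym_dot[OF symA, of y u]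
    by (simp add: algebra_simps inner_add_left inner_add_right inner_diff_left inner_diff_right)
  have "4 * (u \<bullet> (A *v y)) \<le> L * ((u + y) \<bullet> (u + y))"
    using key lo[of "u - y"] up[of "u + y"] by linarith
  also have "(u + y) \<bullet> (u + y) = norm (u + y) ^ 2" by (simp add: power2_norm_eq_inner)
  also have "L * \<dots> \<le> L * (norm u + norm y) ^ 2"
    by (intro mult_left_mono power_mono norm_triangle_ineq L0) simp
  finally have "4 * (norm y * norm (A *v y)) \<le> L * (2 * norm y) ^ 2" using uA nu by simp
  then have "norm y * norm (A *v y) \<le> norm y * (L * norm y)" by (simp add: power2_eq_square algebra_simps)
  then show ?thesis using ny by (simp add: mult_le_cancel_left)
qed



lemma eig_orth:
  fixes S :: "real^'n^'n"
  assumes symS: "transpose S = S" and "S *v v = a *s v" "S *v w = b *s w" "a \<noteq> b"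
  shows "v \<bullet> w = 0"
proof -
  have "a * (v \<bullet> w) = (S *v v) \<bullet> w" using assms(2) by (simp add: scalar_mult_eq_scaleR)
  also have "\<dots> = v \<bullet> (S *v w)" using sym_dot[OF symS, of w v] by (simp add: inner_commute)
  also have "\<dots> = b * (v \<bullet> w)" using assms(3) by (simp add: scalar_mult_eq_scaleR)
  finally show ?thesis using assms(4) by simp
qed

lemma eig_finite:
  fixes S :: "real^'n^'n"
  assumes symS: "transpose S = S"
  shows "finite {t. \<exists>v. v \<noteq> 0 \<and> S *v v = t *s v}"
proof -
  define E where "E = {t. \<exists>v. v \<noteq> 0 \<and> S *v v = t *s v}"
  define e where "e t = (SOME v. v \<noteq> 0 \<and> S *v v = t *s v)" for t
  have e: "e t \<noteq> 0 \<and> S *v e t = t *s e t" if "t \<in> E" for t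
    using that unfolding E_def e_def by (metis (mono_tags, lifting) mem_Collect_eq someI_ex)
  have inj: "inj_on e E"
  proof (rule inj_onI)
    fix a b assume ab: "a \<in> E" "b \<in> E" "e a = e b"
    show "a = b"
    proof (rule ccontr)
      assume "a \<noteq> b"
      then have "e a \<bullet> e b = 0" using eig_orth[OF symS] e ab by blast
      then show False using ab e by simp
    qed
  qed
  have "pairwise orthogonal (e ` E)"
    unfolding pairwise_def orthogonal_def
    using eig_orth[OF symS] e by (metis imageE)
  moreover have "0 \<notin> e ` E" using e by auto
  ultimately have "independent (e ` E)" by (rule pairwise_orthogonal_independent)
  then have "finite (e ` E)" by (rule finiteI_independent)
  then show ?thesis using finite_imageD inj E_def by blast
qed

lemma rayleigh:
  fixes S :: "real^'n^'n"
  assumes symS: "transpose S = S"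
  shows "lambda_min S * (x \<bullet> x) \<le> x \<bullet> (S *v x)"
proof -
  define f where "f z = z \<bullet> (S *v z)" for z
  have ne: "sphere (0::real^'n) 1 \<noteq> {}"
    using norm_axis_1[of undefined] by (metis empty_iff mem_sphere_0)
  have cont: "continuous_on (sphere 0 1) f"
    unfolding f_def by (intro continuous_intros linear_continuous_on matrix_vector_mul_bounded_linear)
  obtain x0 where x0: "x0 \<in> sphere 0 1" and mn: "\<And>y. y \<in> sphere 0 1 \<Longrightarrow> f x0 \<le> f y"
    using continuous_attains_inf[OF compact_sphere ne cont] by blast
  define t0 where "t0 = f x0"
  have n0: "x0 \<bullet> x0 = 1" using x0 by (simp add: norm_eq_1)
  have glob: "t0 * (z \<bullet> z) \<le> f z" for z
  proof (cases "z = 0")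
    case True then show ?thesis by (simp add: f_def)
  next
    case False
    define c where "c = 1 / norm z"
    have c0: "c > 0" using False by (simp add: c_def)
    have "(c *\<^sub>R z) \<in> sphere 0 1" using False by (simp add: c_def)
    then have "t0 \<le> f (c *\<^sub>R z)" using mn t0_def by blast
    also have "f (c *\<^sub>R z) = c^2 * f z" by (simp add: f_def matrix_vector_mult_scaleR power2_eq_square)
    finally have "t0 \<le> c^2 * f z" .
    moreover have "c^2 * (z \<bullet> z) = 1" using False
      by (simp add: c_def power2_norm_eq_inner[symmetric] power_divide)
    ultimately have "t0 * (c^2 * (z \<bullet> z)) \<le> c^2 * f z" by simp
    then have "c^2 * (t0 * (z \<bullet> z)) \<le> c^2 * f z" by (simp add: algebra_simps)
    then show ?thesis using c0 by (simp add: mult_le_cancel_left)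
  qed
  define d where "d = S *v x0 - t0 *\<^sub>R x0"
  have d0: "d = 0"
  proof (rule ccontr)
    assume "d \<noteq> 0"
    then have dd: "d \<bullet> d > 0" by simp
    define g where "g z = f z - t0 * (z \<bullet> z)" for z
    have g0: "g z \<ge> 0" for z using glob[of z] by (simp add: g_def)
    have gx: "g x0 = 0" by (simp add: g_def t0_def n0)
    have exp: "g (x0 - \<delta> *\<^sub>R d) = g x0 - 2 * \<delta> * (d \<bullet> d) + \<delta>^2 * g d" for \<delta>
    proof -
      have s: "x0 \<bullet> (S *v d) = d \<bullet> (S *v x0)" by (rule sym_dot[OF symS])
      have dd': "d \<bullet> (S *v x0) = d \<bullet> d + t0 * (d \<bullet> x0)" by (simp add: d_def inner_diff_right)
      show ?thesis
        unfolding g_def f_def using s dd'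
        by (simp add: algebra_simps matrix_vector_mult_scaleR inner_diff_left inner_diff_right power2_eq_square inner_commute[of x0 d])
    qed
    define \<delta> where "\<delta> = (d \<bullet> d) / (g d + 1)"
    have dp: "\<delta> > 0" using dd g0[of d] by (simp add: \<delta>_def)
    have "0 \<le> - 2 * \<delta> * (d \<bullet> d) + \<delta>^2 * g d" using g0[of "x0 - \<delta> *\<^sub>R d"] exp[of \<delta>] gx by simp
    then have "2 * (d \<bullet> d) \<le> \<delta> * g d" using dp by (simp add: power2_eq_square algebra_simps)
    also have "\<delta> * g d = (d \<bullet> d) * (g d / (g d + 1))" by (simp add: \<delta>_def)
    also have "\<dots> \<le> (d \<bullet> d) * 1" using dd g0[of d] by (intro mult_left_mono) auto
    finally show False using dd by simp
  qed
  have "t0 \<in> {t. \<exists>v. v \<noteq> 0 \<and> S *v v = t *s v}"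
    using d0 x0 by (auto simp: d_def scalar_mult_eq_scaleR intro!: exI[of _ x0])
  then have "lambda_min S \<le> t0" unfolding lambda_min_def by (rule Min_le[OF eig_finite[OF symS]])
  then have "lambda_min S * (x \<bullet> x) \<le> t0 * (x \<bullet> x)" by (simp add: mult_right_mono)
  also have "\<dots> \<le> x \<bullet> (S *v x)" using glob[of x] by (simp add: f_def)
  finally show ?thesis .
qed



lemma scalar4:
  fixes \<mu> L r s lam X Y c a q wy xSx lm :: real
  assumes mu: "\<mu> > 0" and r: "r > 0" and rmu: "r * \<mu> > L" and lam: "lam = r * s"
    and X0: "X \<ge> 0" and Y0: "Y \<ge> 0" and XY: "X = 0 \<longrightarrow> Y > 0"
    and cl: "c \<ge> - L * X" and al: "a \<ge> \<mu> * Y" and q0: "q \<ge> 0" and qY: "q * \<mu> \<le> Y"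
    and e1: "- c - wy = lam * X" and e2: "wy = a + s * Y"
    and eS: "xSx = c + wy + s * Y + s^2 * q"
    and pd: "X > 0 \<longrightarrow> xSx > 0" and rl: "xSx \<ge> lm * X"
  shows "lam \<le> - min L lm"
proof (rule ccontr)
  assume "\<not> ?thesis"
  then have l1: "lam > - L" and l2: "lam > - lm" by auto
  have K1: "a + s * Y \<le> (L - lam) * X" using e1 e2 cl by (simp add: algebra_simps)
  have sq: "\<mu> * (s^2 * q) \<le> s^2 * Y" using mult_right_mono[OF qY, of "s^2"] by (simp add: algebra_simps)
  show False
  proof (cases "X = 0")
    case True
    then have "Y > 0" using XY by simp
    have "(\<mu> + s) * Y \<le> 0" using K1 al True by (simp add: algebra_simps)
    then have "\<mu> + s \<le> 0" using \<open>Y > 0\<close> by (simp add: mult_le_0_iff)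
    then have "r * s \<le> r * (- \<mu>)" using r by (intro mult_left_mono) auto
    then show False using l1 lam rmu by simp
  next
    case False
    then have Xp: "X > 0" using X0 by simp
    have xs: "xSx = - lam * X + s * Y + s^2 * q" using eS e1 by simp
    show False
    proof (cases "lam \<ge> 0")
      case True
      then have s0: "s \<ge> 0" using lam r by (simp add: zero_le_mult_iff)
      have pos: "xSx > 0" using pd Xp by simp
      show False
      proof (cases "s = 0")
        case True then show False using pos xs lam by simp
      next
        case False
        then have sp: "s > 0" using s0 by simp
        have "\<mu> * (lam * X) < \<mu> * (s * Y + s^2 * q)" using pos xs mu by simp
        also have "\<dots> \<le> \<mu> * s * Y + s^2 * Y" using sq by (simp add: algebra_simps)
        finally have "s * (\<mu> * r * X) < s * ((\<mu> + s) * Y)" using lam by (simp add: algebra_simps power2_eq_square)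
        then have "\<mu> * r * X < (\<mu> + s) * Y" using sp by simp
        also have "\<dots> \<le> (L - lam) * X" using K1 al by (simp add: algebra_simps)
        also have "\<dots> \<le> L * X" using True Xp by (simp add: algebra_simps)
        finally have "r * \<mu> < L" using Xp by (simp add: algebra_simps)
        then show False using rmu by simp
      qed
    next
      case False
      then have sn: "s < 0" using lam r by (metis mult_nonneg_nonneg not_le order_less_imp_le)
      have "lm * X > - lam * X" using mult_strict_right_mono[of "-lam" lm X] l2 Xp by simp
      then have "s * Y + s^2 * q > 0" using rl xs by simp
      then have "\<mu> * (s * Y + s^2 * q) > 0" using mu by simp
      then have "\<mu> * s * Y + s^2 * Y > 0" using sq by (simp add: algebra_simps)
      then have "s * ((\<mu> + s) * Y) > 0" by (simp add: algebra_simps power2_eq_square)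
      then have "(\<mu> + s) * Y < 0" using sn by (simp add: zero_less_mult_iff)
      then have "\<mu> + s < 0" using Y0 by (simp add: mult_less_0_iff)
      then have "r * s < r * (- \<mu>)" using r by (intro mult_strict_left_mono) auto
      then show False using l1 lam rmu by simp
    qed
  qed
qed


declare transpose_matrix_vector[simp del]

lemma transpose_add: "transpose (X + Y) = transpose X + transpose (Y::real^'a^'b)"
  by (simp add: transpose_def vec_eq_iff)

lemma inv_facts:
  fixes A :: "real^'m^'m"
  assumes symA: "transpose A = A" and lo: "\<And>z. \<mu> * (z \<bullet> z) \<le> z \<bullet> (A *v z)" and mu: "\<mu> > 0"
  shows "A ** matrix_inv A = mat 1 \<and> matrix_inv A ** A = mat 1 \<and> transpose (matrix_inv A) = matrix_inv A"
proof -
  have "\<forall>x. A *v x = 0 \<longrightarrow> x = 0"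
  proof (intro allI impI)
    fix x assume "A *v x = 0"
    then have "\<mu> * (x \<bullet> x) \<le> 0" using lo[of x] by simp
    then have "x \<bullet> x \<le> 0" using mu by (simp add: mult_le_0_iff)
    then show "x = 0" by (metis inner_eq_zero_iff inner_ge_zero order_antisym)
  qed
  then have "invertible A" by (simp add: invertible_left_inverse matrix_left_invertible_ker)
  then have inv: "A ** matrix_inv A = mat 1 \<and> matrix_inv A ** A = mat 1"
    unfolding invertible_def matrix_inv_def by (rule someI_ex)
  let ?I = "matrix_inv A"
  have "transpose ?I ** A = mat 1"
    by (metis inv matrix_transpose_mul symA transpose_mat)
  then have "transpose ?I = transpose ?I ** (A ** ?I)" using inv by simp
  also have "\<dots> = ?I" by (simp add: matrix_mul_assoc \<open>transpose ?I ** A = mat 1\<close>)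
  finally show ?thesis using inv by simp
qed

lemma real_eig:
  fixes A :: "real^'m^'m" and C :: "real^'n^'n" and B :: "real^'m^'n"
  assumes symA: "transpose A = A" and symC: "transpose C = C"
    and mu: "0 < \<mu>" and lo: "\<And>z. \<mu> * (z \<bullet> z) \<le> z \<bullet> (A *v z)"
    and normC: "spec_norm C \<le> L"
    and pd: "pos_def (C + B ** matrix_inv A ** transpose B)"
    and r: "0 < r" and rmu: "r * \<mu> > L"
    and nz: "x \<noteq> 0 \<or> y \<noteq> 0"
    and E1: "- (C *v x) - B *v y = lam *s x"
    and E2: "r *s (transpose B *v x) - r *s (A *v y) = lam *s y"
  shows "lam \<le> - min L (lambda_min (C + B ** matrix_inv A ** transpose B))"
proof -
  obtain AI: "A ** matrix_inv A = mat 1" "matrix_inv A ** A = mat 1" "transpose (matrix_inv A) = matrix_inv A"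
    using inv_facts[OF symA lo mu] by blast
  define Ai where "Ai = matrix_inv A"
  define S where "S = C + B ** matrix_inv A ** transpose B"
  have symS: "transpose S = S"
    using symC AI(3) by (simp add: S_def matrix_transpose_mul matrix_mul_assoc transpose_add)
  define X where "X = x \<bullet> x"
  define Y where "Y = y \<bullet> y"
  define c where "c = x \<bullet> (C *v x)"
  define a where "a = y \<bullet> (A *v y)"
  define w where "w = transpose B *v x"
  define s where "s = lam / r"
  define u where "u = Ai *v w"
  define q where "q = y \<bullet> (Ai *v y)"
  have lamrs: "lam = r * s" using r by (simp add: s_def)
  have e1: "- c - w \<bullet> y = lam * X"
  proof -
    have "x \<bullet> (- (C *v x) - B *v y) = x \<bullet> (lam *s x)" using E1 by simp
    then show ?thesis by (simp add: c_def X_def w_def tr_dot inner_diff_right scalar_mult_eq_scaleR)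
  qed
  have wv: "w = A *v y + s *s y"
  proof -
    have "r *s w = r *s (A *v y + s *s y)" using E2 lamrs
      by (simp add: w_def vec_eq_iff algebra_simps)
    then have "(1/r) *s (r *s w) = (1/r) *s (r *s (A *v y + s *s y))" by simp
    then show ?thesis using r by (simp only: vector_smult_assoc) simp
  qed
  have e2: "w \<bullet> y = a + s * Y"
    using wv by (simp add: a_def Y_def inner_add_left inner_add_right scalar_mult_eq_scaleR inner_commute)
  have Au: "A *v u = w" by (simp add: u_def Ai_def matrix_vector_mul_assoc AI(1))
  have "(B ** Ai ** transpose B) *v x = B *v u"
    unfolding u_def w_def by (metis matrix_vector_mul_assoc)
  then have "S *v x = C *v x + B *v u"
    by (simp only: S_def Ai_def matrix_vector_mult_add_rdistrib)
  then have xS: "x \<bullet> (S *v x) = c + w \<bullet> u" by (simp add: c_def inner_add_right tr_dot w_def)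
  have yu: "y \<bullet> u = Y + s * q"
  proof -
    have "u = Ai *v (A *v y) + s *s (Ai *v y)" using wv
      by (simp add: u_def matrix_vector_right_distrib vector_scalar_commute)
    also have "Ai *v (A *v y) = y" by (simp add: Ai_def matrix_vector_mul_assoc AI(2))
    finally show ?thesis by (simp add: Y_def q_def inner_add_right scalar_mult_eq_scaleR)
  qed
  have wu: "w \<bullet> u = w \<bullet> y + s * (Y + s * q)"
  proof -
    have "w \<bullet> u = (A *v y) \<bullet> u + s * (y \<bullet> u)" using wv by (simp add: inner_add_left scalar_mult_eq_scaleR)
    also have "(A *v y) \<bullet> u = y \<bullet> (A *v u)" using sym_dot[OF symA, of u y] by (simp add: inner_commute)
    finally show ?thesis using Au yu by (simp add: inner_commute)
  qed
  have eS: "x \<bullet> (S *v x) = c + w \<bullet> y + s * Y + s^2 * q"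
    using xS wu by (simp add: algebra_simps power2_eq_square)
  define z where "z = Ai *v y"
  have yz: "A *v z = y" by (simp add: z_def Ai_def matrix_vector_mul_assoc AI(1))
  have qz: "q = z \<bullet> (A *v z)" using yz by (simp add: q_def z_def[symmetric] inner_commute)
  have q0: "q \<ge> 0" proof -
    have "0 \<le> \<mu> * (z \<bullet> z)" using mu by simp
    then show ?thesis using qz lo[of z] by linarith
  qed
  have qY: "q * \<mu> \<le> Y"
  proof -
    have "\<mu> * (norm z)^2 \<le> q" using qz lo[of z] by (simp add: power2_norm_eq_inner)
    also have "q = z \<bullet> y" using qz yz by simp
    also have "\<dots> \<le> norm z * norm y" by (rule norm_cauchy_schwarz)
    finally have h: "\<mu> * (norm z)^2 \<le> norm z * norm y" .
    have "\<mu> * norm z \<le> norm y"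
    proof (cases "norm z = 0")
      case True then show ?thesis by simp
    next
      case False
      then have "norm z * (\<mu> * norm z) \<le> norm z * norm y" using h by (simp add: power2_eq_square algebra_simps)
      then show ?thesis using False by (simp add: mult_le_cancel_left)
    qed
    have "q * \<mu> \<le> norm z * norm y * \<mu>" using \<open>q = z \<bullet> y\<close> norm_cauchy_schwarz[of z y] mu
      by (simp add: mult_right_mono)
    also have "\<dots> = norm y * (\<mu> * norm z)" by simp
    also have "\<dots> \<le> norm y * norm y" using \<open>\<mu> * norm z \<le> norm y\<close> by (simp add: mult_left_mono)
    also have "\<dots> = Y" by (simp add: Y_def power2_eq_square[symmetric] power2_norm_eq_inner)
    finally show ?thesis .
  qed
  have XY: "X = 0 \<longrightarrow> Y > 0" using nz by (simp add: X_def Y_def)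
  have pdx: "X > 0 \<longrightarrow> x \<bullet> (S *v x) > 0" using pd by (simp add: pos_def_def S_def X_def)
  have rl: "x \<bullet> (S *v x) \<ge> lambda_min S * X" using rayleigh[OF symS] by (simp add: X_def)
  have cl: "c \<ge> - L * X" using quad_lower[OF normC] by (simp add: c_def X_def)
  have al: "a \<ge> \<mu> * Y" using lo by (simp add: a_def Y_def)
  have X0: "X \<ge> 0" and Y0: "Y \<ge> 0" by (simp_all add: X_def Y_def)
  have "lam \<le> - min L (lambda_min S)"
    by (rule scalar4[OF mu r rmu lamrs X0 Y0 XY cl al q0 qY e1 e2 eS pdx rl])
  then show ?thesis by (simp only: S_def)
qed



lemma cs2: "((n2::real) * m1 + n1 * m2)^2 \<le> (n1^2 + n2^2) * (m1^2 + m2^2)"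
proof -
  have "(n1^2 + n2^2) * (m1^2 + m2^2) - (n2 * m1 + n1 * m2)^2 = (n1 * m1 - n2 * m2)^2"
    by (simp add: power2_eq_square algebra_simps)
  then show ?thesis by (metis diff_ge_0_iff_ge zero_le_power2)
qed

lemma Bdot: "spec_norm B \<le> L \<Longrightarrow> \<bar>x \<bullet> (B *v y)\<bar> \<le> L * (norm x * norm y)"
proof -
  assume h: "spec_norm B \<le> L"
  have "\<bar>x \<bullet> (B *v y)\<bar> \<le> norm x * norm (B *v y)" by (rule Cauchy_Schwarz_ineq2)
  also have "\<dots> \<le> norm x * (L * norm y)" by (simp add: spec_bound[OF h] mult_left_mono)
  finally show ?thesis by (simp add: algebra_simps)
qed

lemma block_norm:
  fixes A :: "real^'m^'m" and C :: "real^'n^'n" and B :: "real^'m^'n"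
  assumes symA: "transpose A = A" and lo: "\<And>z. 0 \<le> z \<bullet> (A *v z)" and up: "\<And>z. z \<bullet> (A *v z) \<le> L * (z \<bullet> z)"
    and L0: "0 \<le> L" and normB: "spec_norm B \<le> L" and normC: "spec_norm C \<le> L" and r1: "1 \<le> r"
  shows "norm (blockM A B C r *v z) \<le> 2 * r * L * norm z"
proof -
  define x where "x = xp z"
  define y where "y = yp z"
  let ?w = "blockM A B C r *v z"
  have nz: "norm z ^ 2 = norm x ^ 2 + norm y ^ 2"
    by (simp add: power2_norm_eq_inner inner_split[of z z] x_def y_def)
  have nw: "norm ?w ^ 2 = norm (xp ?w) ^ 2 + norm (yp ?w) ^ 2"
    by (simp add: power2_norm_eq_inner inner_split[of ?w ?w])
  have b1: "norm (xp ?w) \<le> L * norm x + L * norm y"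
  proof -
    have "norm (xp ?w) = norm (- (C *v x) - B *v y)" by (simp add: blockM_xp x_def y_def)
    also have "\<dots> \<le> norm (C *v x) + norm (B *v y)" using norm_triangle_ineq4[of "-(C *v x)" "B *v y"] by simp
    also have "\<dots> \<le> L * norm x + L * norm y" using spec_bound[OF normC] spec_bound[OF normB] by (intro add_mono)
    finally show ?thesis .
  qed
  have b2: "norm (yp ?w) \<le> r * (L * norm x + L * norm y)"
  proof -
    have "yp ?w = r *s (transpose B *v x) - r *s (A *v y)"
      by (simp only: blockM_yp x_def y_def)
    then have "yp ?w = r *\<^sub>R (transpose B *v x - A *v y)"
      by (simp only: scalar_mult_eq_scaleR scaleR_diff_right)
    then have "norm (yp ?w) = r * norm (transpose B *v x - A *v y)" using r1 by simp
    also have "norm (transpose B *v x - A *v y) \<le> norm (transpose B *v x) + norm (A *v y)" by (rule norm_triangle_ineq4)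
    also have "\<dots> \<le> L * norm x + L * norm y"
      using tr_bound[OF normB] sym_bound[OF symA lo up L0] by (intro add_mono)
    finally show ?thesis using r1 by (simp add: mult_left_mono)
  qed
  define t where "t = L * norm x + L * norm y"
  have t0: "t \<ge> 0" using L0 by (simp add: t_def)
  have tb: "t^2 \<le> L^2 * (2 * (norm x ^2 + norm y ^2))"
  proof -
    have "t^2 = L^2 * (norm x + norm y)^2" by (simp add: t_def power2_eq_square algebra_simps)
    also have "(norm x + norm y)^2 \<le> 2 * (norm x ^2 + norm y ^2)"
      using sum_squares_ge_zero[of "norm x - norm y" 0] by (simp add: power2_eq_square algebra_simps)
    finally show ?thesis by (simp add: mult_left_mono)
  qed
  have h1: "norm (xp ?w)^2 \<le> t^2" using power_mono[OF b1 norm_ge_zero, of 2] by (simp only: t_def)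
  have h2: "norm (yp ?w)^2 \<le> (r * t)^2" using power_mono[OF b2 norm_ge_zero, of 2] by (simp only: t_def)
  have "norm ?w ^ 2 \<le> t^2 + (r * t)^2"
    using nw h1 h2 by linarith
  also have "\<dots> = (1 + r^2) * t^2" by (simp add: power2_eq_square algebra_simps)
  also have "(1 + r^2) * t^2 \<le> (1 + r^2) * (L^2 * (2 * (norm x ^2 + norm y ^2)))" using tb by (simp add: mult_left_mono)
  also have "\<dots> \<le> (4 * r^2) * (L^2 * (norm x ^2 + norm y ^2))"
  proof -
    have "2 * (1 + r^2) \<le> 4 * r^2" using r1 mult_mono[OF r1 r1] by (simp add: power2_eq_square)
    moreover have "0 \<le> L^2 * (norm x ^2 + norm y ^2)" by simp
    ultimately have "(2 * (1 + r^2)) * (L^2 * (norm x ^2 + norm y ^2)) \<le> (4 * r^2) * (L^2 * (norm x ^2 + norm y ^2))"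
      by (rule mult_right_mono)
    then show ?thesis by (simp only: mult.assoc mult.left_commute[of 2])
  qed
  also have "\<dots> = (2 * r * L * norm z)^2" unfolding nz[symmetric] by (simp add: power_mult_distrib)
  finally have "norm ?w ^ 2 \<le> (2 * r * L * norm z)^2" .
  moreover have "0 \<le> 2 * r * L * norm z" using r1 L0 by simp
  ultimately show ?thesis by (rule power2_le_imp_le)
qed



lemma part12:
  fixes r \<mu> L X Y cC Z aA K l0 l1 :: real
  assumes r: "r > 0" and mu: "\<mu> > 0" and L0: "L \<ge> 0" and X0: "X \<ge> 0" and Y0: "Y \<ge> 0" and XY: "X + Y > 0"
    and F1: "- cC - Z = l0 * X" and F2: "K = l1 * X" and F3: "r * Z - r * aA = l0 * Y" and F4: "r * K = l1 * Y"
    and cl: "cC \<ge> - L * X" and al: "aA \<ge> \<mu> * Y" and KB: "K^2 \<le> L^2 * X * Y"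
  shows "\<bar>l1\<bar> \<le> sqrt r * L \<and> (l1 \<noteq> 0 \<longrightarrow> l0 \<le> - (\<mu> * (r - L / \<mu>)) / 2)"
proof (cases "l1 = 0")
  case True
  have "0 \<le> sqrt r * L" using L0 r by simp
  then show ?thesis using True by simp
next
  case False
  have "l1 * Y = l1 * (r * X)" using F2 F4 by (simp only: mult.left_commute mult.commute)
  then have YX: "Y = r * X" using False by simp
  have Xp: "X > 0"
  proof (rule ccontr)
    assume "\<not> X > 0" then have "X = 0" using X0 by simp
    then show False using XY YX by simp
  qed
  have "l1^2 * X^2 = K^2" using F2 by (simp add: power_mult_distrib)
  also have "\<dots> \<le> L^2 * X * Y" by (rule KB)
  also have "\<dots> = (r * L^2) * X^2" using YX by (simp add: power2_eq_square algebra_simps)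
  finally have "l1^2 \<le> r * L^2" using Xp by (simp add: mult_le_cancel_right)
  then have "sqrt (l1^2) \<le> sqrt (r * L^2)" by (rule real_sqrt_le_mono)
  then have p1: "\<bar>l1\<bar> \<le> sqrt r * L" using L0 by (simp add: real_sqrt_mult)
  have "r * (l0 * X) = r * (- cC - Z)" using F1 by simp
  moreover have "r * (l0 * X) = r * Z - r * aA" using F3 YX by (simp add: algebra_simps)
  ultimately have "2 * (r * (l0 * X)) = r * (- cC - aA)" by (simp add: algebra_simps)
  then have "r * (2 * (l0 * X)) = r * (- cC - aA)" by (metis mult.left_commute)
  then have "2 * (l0 * X) = - cC - aA" using r by simp
  also have "\<dots> \<le> L * X - \<mu> * (r * X)" using cl al YX by simp
  finally have "(2 * l0) * X \<le> (L - \<mu> * r) * X" by (simp add: algebra_simps)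
  then have "2 * l0 \<le> L - \<mu> * r" using Xp by (simp add: mult_le_cancel_right)
  moreover have "\<mu> * (r - L / \<mu>) = \<mu> * r - L" using mu by (simp add: algebra_simps)
  ultimately have "l0 \<le> - (\<mu> * (r - L / \<mu>)) / 2" by simp
  with p1 show ?thesis by simp
qed



theorem lemma1:
  fixes A :: "real^'m^'m" and C :: "real^'n^'n" and B :: "real^'m^'n"
    and \<mu> L r :: real and lam :: complex
  assumes symA: "transpose A = A" and symC: "transpose C = C"
    and mu_pos: "0 < \<mu>" and mu_le_L: "\<mu> \<le> L"
    and A_lower: "psd_le (\<mu> *\<^sub>R mat 1) A" and A_upper: "psd_le A (L *\<^sub>R mat 1)"
    and normB: "spec_norm B \<le> L" and normC: "spec_norm C \<le> L"
    and schur_pd: "pos_def (C + B ** matrix_inv A ** transpose B)"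
    and r_pos: "0 < r"
    and eig: "is_eigenvalue (blockM A B C r) lam"
  shows "\<bar>Im lam\<bar> \<le> sqrt r * L
    \<and> (Im lam \<noteq> 0 \<longrightarrow> Re lam \<le> - (\<mu> * (r - L / \<mu>)) / 2)
    \<and> (r \<ge> 1 \<longrightarrow> (Re lam)\<^sup>2 + (Im lam)\<^sup>2 \<le> (spec_norm (blockM A B C r))\<^sup>2
                   \<and> (spec_norm (blockM A B C r))\<^sup>2 \<le> 4 * r\<^sup>2 * L\<^sup>2)
    \<and> (r > L / \<mu> \<and> Im lam = 0 \<longrightarrow>
           Re lam \<le> - min L (lambda_min (C + B ** matrix_inv A ** transpose B)))
    \<and> (r > L / \<mu> \<and> min L (lambda_min (C + B ** matrix_inv A ** transpose B)) > 0 \<longrightarrow>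
           Re lam < 0)"
proof -
  have lo: "\<And>z. \<mu> * (z \<bullet> z) \<le> z \<bullet> (A *v z)" using psd_lower[OF A_lower] .
  have up: "\<And>z. z \<bullet> (A *v z) \<le> L * (z \<bullet> z)" using psd_upper[OF A_upper] .
  have L0: "0 \<le> L" using mu_pos mu_le_L by simp
  have lo0: "\<And>z. 0 \<le> z \<bullet> (A *v z)"
  proof -
    fix z :: "real^'m"
    have "0 \<le> \<mu> * (z \<bullet> z)" using mu_pos by simp
    then show "0 \<le> z \<bullet> (A *v z)" using lo[of z] by linarith
  qed
  define M where "M = blockM A B C r"
  define l0 where "l0 = Re lam"
  define l1 where "l1 = Im lam"
  obtain p q where nz: "p \<noteq> 0 \<or> q \<noteq> 0" and Ep: "M *v p = l0 *s p - l1 *s q"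
    and Eq: "M *v q = l1 *s p + l0 *s q"
    using eig_real[OF eig] unfolding M_def l0_def l1_def by blast
  define x1 where "x1 = xp p"
  define y1 where "y1 = yp p"
  define x2 where "x2 = xp q"
  define y2 where "y2 = yp q"
  have E1: "- (C *v x1) - B *v y1 = l0 *s x1 - l1 *s x2"
  proof -
    have "xp (M *v p) = xp (l0 *s p - l1 *s q)" using Ep by simp
    then show ?thesis by (simp only: M_def blockM_xp xp_lin x1_def y1_def x2_def)
  qed
  have E2: "r *s (transpose B *v x1) - r *s (A *v y1) = l0 *s y1 - l1 *s y2"
  proof -
    have "yp (M *v p) = yp (l0 *s p - l1 *s q)" using Ep by simp
    then show ?thesis by (simp only: M_def blockM_yp xp_lin x1_def y1_def y2_def)
  qed
  have E3: "- (C *v x2) - B *v y2 = l1 *s x1 + l0 *s x2"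
  proof -
    have "xp (M *v q) = xp (l1 *s p + l0 *s q)" using Eq by simp
    then show ?thesis by (simp only: M_def blockM_xp xp_lin x1_def y2_def x2_def)
  qed
  have E4: "r *s (transpose B *v x2) - r *s (A *v y2) = l1 *s y1 + l0 *s y2"
  proof -
    have "yp (M *v q) = yp (l1 *s p + l0 *s q)" using Eq by simp
    then show ?thesis by (simp only: M_def blockM_yp xp_lin x2_def y1_def y2_def)
  qed
  note ips = inner_diff_right inner_minus_right inner_add_right scalar_mult_eq_scaleR inner_scaleR_right
  have d1: "- (x1 \<bullet> (C *v x1)) - x1 \<bullet> (B *v y1) = l0 * (x1 \<bullet> x1) - l1 * (x1 \<bullet> x2)"
  proof -
    have "x1 \<bullet> (- (C *v x1) - B *v y1) = x1 \<bullet> (l0 *s x1 - l1 *s x2)" using E1 by simp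
    then show ?thesis by (simp only: ips)
  qed
  have d2: "- (x2 \<bullet> (C *v x1)) - x2 \<bullet> (B *v y1) = l0 * (x2 \<bullet> x1) - l1 * (x2 \<bullet> x2)"
  proof -
    have "x2 \<bullet> (- (C *v x1) - B *v y1) = x2 \<bullet> (l0 *s x1 - l1 *s x2)" using E1 by simp
    then show ?thesis by (simp only: ips)
  qed
  have d3: "- (x2 \<bullet> (C *v x2)) - x2 \<bullet> (B *v y2) = l1 * (x2 \<bullet> x1) + l0 * (x2 \<bullet> x2)"
  proof -
    have "x2 \<bullet> (- (C *v x2) - B *v y2) = x2 \<bullet> (l1 *s x1 + l0 *s x2)" using E3 by simp
    then show ?thesis by (simp only: ips)
  qed
  have d4: "- (x1 \<bullet> (C *v x2)) - x1 \<bullet> (B *v y2) = l1 * (x1 \<bullet> x1) + l0 * (x1 \<bullet> x2)"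
  proof -
    have "x1 \<bullet> (- (C *v x2) - B *v y2) = x1 \<bullet> (l1 *s x1 + l0 *s x2)" using E3 by simp
    then show ?thesis by (simp only: ips)
  qed
  have e1: "r * (y1 \<bullet> (transpose B *v x1)) - r * (y1 \<bullet> (A *v y1)) = l0 * (y1 \<bullet> y1) - l1 * (y1 \<bullet> y2)"
  proof -
    have "y1 \<bullet> (r *s (transpose B *v x1) - r *s (A *v y1)) = y1 \<bullet> (l0 *s y1 - l1 *s y2)" using E2 by simp
    then show ?thesis by (simp only: ips)
  qed
  have e2: "r * (y2 \<bullet> (transpose B *v x1)) - r * (y2 \<bullet> (A *v y1)) = l0 * (y2 \<bullet> y1) - l1 * (y2 \<bullet> y2)"
  proof -
    have "y2 \<bullet> (r *s (transpose B *v x1) - r *s (A *v y1)) = y2 \<bullet> (l0 *s y1 - l1 *s y2)" using E2 by simp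
    then show ?thesis by (simp only: ips)
  qed
  have e3: "r * (y2 \<bullet> (transpose B *v x2)) - r * (y2 \<bullet> (A *v y2)) = l1 * (y2 \<bullet> y1) + l0 * (y2 \<bullet> y2)"
  proof -
    have "y2 \<bullet> (r *s (transpose B *v x2) - r *s (A *v y2)) = y2 \<bullet> (l1 *s y1 + l0 *s y2)" using E4 by simp
    then show ?thesis by (simp only: ips)
  qed
  have e4: "r * (y1 \<bullet> (transpose B *v x2)) - r * (y1 \<bullet> (A *v y2)) = l1 * (y1 \<bullet> y1) + l0 * (y1 \<bullet> y2)"
  proof -
    have "y1 \<bullet> (r *s (transpose B *v x2) - r *s (A *v y2)) = y1 \<bullet> (l1 *s y1 + l0 *s y2)" using E4 by simp
    then show ?thesis by (simp only: ips)
  qed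
  have sC: "x2 \<bullet> (C *v x1) = x1 \<bullet> (C *v x2)" by (rule sym_dot[OF symC])
  have sA: "y2 \<bullet> (A *v y1) = y1 \<bullet> (A *v y2)" by (rule sym_dot[OF symA])
  have tB: "\<And>x y. y \<bullet> (transpose B *v x) = x \<bullet> (B *v y)"
  proof -
    fix x y
    show "y \<bullet> (transpose B *v x) = x \<bullet> (B *v y)"
      by (simp only: tr_dot[of x B y] inner_commute[of y "transpose B *v x"])
  qed
  have cm: "x2 \<bullet> x1 = x1 \<bullet> x2" "y2 \<bullet> y1 = y1 \<bullet> y2" by (simp_all add: inner_commute)
  define X where "X = x1 \<bullet> x1 + x2 \<bullet> x2"
  define Y where "Y = y1 \<bullet> y1 + y2 \<bullet> y2"
  define cC where "cC = x1 \<bullet> (C *v x1) + x2 \<bullet> (C *v x2)"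
  define aA where "aA = y1 \<bullet> (A *v y1) + y2 \<bullet> (A *v y2)"
  define Z where "Z = x1 \<bullet> (B *v y1) + x2 \<bullet> (B *v y2)"
  define K where "K = x2 \<bullet> (B *v y1) - x1 \<bullet> (B *v y2)"
  have F1: "- cC - Z = l0 * X"
    using d1 d3 unfolding cm cC_def Z_def X_def distrib_left by linarith
  have F2: "K = l1 * X"
    using d2 d4 unfolding cm sC K_def X_def distrib_left by linarith
  have F3: "r * Z - r * aA = l0 * Y"
    using e1 e3 unfolding cm tB Z_def aA_def Y_def distrib_left by linarith
  have F4: "r * K = l1 * Y"
    using e2 e4 unfolding cm tB sA K_def Y_def distrib_left right_diff_distrib by linarith
  have X0: "X \<ge> 0" and Y0: "Y \<ge> 0" by (simp_all add: X_def Y_def)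
  have XY: "X + Y > 0"
  proof -
    have "(x1 \<noteq> 0 \<or> y1 \<noteq> 0) \<or> (x2 \<noteq> 0 \<or> y2 \<noteq> 0)"
      using nz split_zero[of p] split_zero[of q] unfolding x1_def y1_def x2_def y2_def by argo
    then have "x1 \<bullet> x1 > 0 \<or> y1 \<bullet> y1 > 0 \<or> x2 \<bullet> x2 > 0 \<or> y2 \<bullet> y2 > 0"
      by (simp only: inner_gt_zero_iff disj_assoc)
    moreover have "x1 \<bullet> x1 \<ge> 0" "y1 \<bullet> y1 \<ge> 0" "x2 \<bullet> x2 \<ge> 0" "y2 \<bullet> y2 \<ge> 0" by simp_all
    ultimately show ?thesis unfolding X_def Y_def by linarith
  qed
  have cl: "cC \<ge> - L * X"
    using quad_lower[OF normC, of x1] quad_lower[OF normC, of x2] unfolding cC_def X_def distrib_left by linarith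
  have al: "aA \<ge> \<mu> * Y"
    using lo[of y1] lo[of y2] unfolding aA_def Y_def distrib_left by linarith
  have KB: "K^2 \<le> L^2 * X * Y"
  proof -
    define T where "T = norm x2 * norm y1 + norm x1 * norm y2"
    have "\<bar>K\<bar> \<le> L * T"
      using Bdot[OF normB, of x2 y1] Bdot[OF normB, of x1 y2] unfolding K_def T_def distrib_left by linarith
    then have "\<bar>K\<bar>^2 \<le> (L * T)^2" by (rule power_mono) simp
    also have "\<dots> = L^2 * T^2" by (simp add: power_mult_distrib)
    also have "T^2 \<le> X * Y"
      using cs2[of "norm x2" "norm y1" "norm x1" "norm y2"]
      by (simp add: T_def X_def Y_def power2_norm_eq_inner)
    then have "L^2 * T^2 \<le> L^2 * (X * Y)" by (simp add: mult_left_mono)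
    finally show ?thesis by (simp add: mult.assoc)
  qed
  have P12: "\<bar>l1\<bar> \<le> sqrt r * L \<and> (l1 \<noteq> 0 \<longrightarrow> l0 \<le> - (\<mu> * (r - L / \<mu>)) / 2)"
    by (rule part12[OF r_pos mu_pos L0 X0 Y0 XY F1 F2 F3 F4 cl al KB])
  have P3: "r \<ge> 1 \<longrightarrow> l0\<^sup>2 + l1\<^sup>2 \<le> (spec_norm M)\<^sup>2 \<and> (spec_norm M)\<^sup>2 \<le> 4 * r\<^sup>2 * L\<^sup>2"
  proof
    assume r1: "r \<ge> 1"
    have bnd: "norm (M *v z) \<le> 2 * r * L * norm z" for z
      unfolding M_def by (rule block_norm[OF symA lo0 up L0 normB normC r1])
    have sn_le: "spec_norm M \<le> 2 * r * L" unfolding spec_norm_def by (rule onorm_le) (rule bnd)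
    have sn0: "0 \<le> spec_norm M" unfolding spec_norm_def
      by (rule onorm_pos_le) (rule matrix_vector_mul_bounded_linear)
    have "(spec_norm M)^2 \<le> (2 * r * L)^2" by (rule power_mono[OF sn_le sn0])
    also have "\<dots> = 4 * r^2 * L^2" by (simp add: power_mult_distrib)
    finally have s2: "(spec_norm M)^2 \<le> 4 * r^2 * L^2" .
    have onp: "norm (M *v z) \<le> spec_norm M * norm z" for z unfolding spec_norm_def
      by (rule onorm) (rule matrix_vector_mul_bounded_linear)
    have onp2: "norm (M *v z)^2 \<le> (spec_norm M)^2 * norm z ^2" for z
    proof -
      have "norm (M *v z)^2 \<le> (spec_norm M * norm z)^2" by (rule power_mono[OF onp norm_ge_zero])
      then show ?thesis by (simp add: power_mult_distrib)
    qed
    have sid: "norm (M *v p)^2 + norm (M *v q)^2 = (l0^2 + l1^2) * (norm p ^2 + norm q ^2)"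
      unfolding Ep Eq power2_norm_eq_inner scalar_mult_eq_scaleR
      by (simp add: inner_diff_left inner_diff_right inner_add_left inner_add_right
          inner_commute[of q p] power2_eq_square algebra_simps)
    have Np: "norm p ^2 + norm q ^2 > 0"
    proof -
      have "norm p ^2 > 0 \<or> norm q ^2 > 0" using nz by simp
      moreover have "norm p ^2 \<ge> 0" "norm q ^2 \<ge> 0" by simp_all
      ultimately show ?thesis by linarith
    qed
    have "(l0^2 + l1^2) * (norm p ^2 + norm q ^2) \<le> (spec_norm M)^2 * (norm p ^2 + norm q ^2)"
      using sid onp2[of p] onp2[of q] by (simp add: distrib_left)
    then have "l0^2 + l1^2 \<le> (spec_norm M)^2" using Np by (simp add: mult_le_cancel_right)
    with s2 show "l0\<^sup>2 + l1\<^sup>2 \<le> (spec_norm M)\<^sup>2 \<and> (spec_norm M)\<^sup>2 \<le> 4 * r\<^sup>2 * L\<^sup>2" by simp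
  qed
  have rmu: "r > L / \<mu> \<Longrightarrow> r * \<mu> > L" using mu_pos by (simp add: divide_less_eq)
  have P4: "r > L / \<mu> \<and> l1 = 0 \<longrightarrow> l0 \<le> - min L (lambda_min (C + B ** matrix_inv A ** transpose B))"
  proof
    assume h: "r > L / \<mu> \<and> l1 = 0"
    show "l0 \<le> - min L (lambda_min (C + B ** matrix_inv A ** transpose B))"
    proof (cases "p \<noteq> 0")
      case True
      then have "x1 \<noteq> 0 \<or> y1 \<noteq> 0" using split_zero[of p] by (simp add: x1_def y1_def)
      moreover have "- (C *v x1) - B *v y1 = l0 *s x1" using E1 h by simp
      moreover have "r *s (transpose B *v x1) - r *s (A *v y1) = l0 *s y1" using E2 h by simp
      ultimately show ?thesis
        using real_eig[OF symA symC mu_pos lo normC schur_pd r_pos rmu] h by blast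
    next
      case False
      then have "q \<noteq> 0" using nz by simp
      then have "x2 \<noteq> 0 \<or> y2 \<noteq> 0" using split_zero[of q] by (simp add: x2_def y2_def)
      moreover have "- (C *v x2) - B *v y2 = l0 *s x2" using E3 h by simp
      moreover have "r *s (transpose B *v x2) - r *s (A *v y2) = l0 *s y2" using E4 h by simp
      ultimately show ?thesis
        using real_eig[OF symA symC mu_pos lo normC schur_pd r_pos rmu] h by blast
    qed
  qed
  have P5: "r > L / \<mu> \<and> min L (lambda_min (C + B ** matrix_inv A ** transpose B)) > 0 \<longrightarrow> l0 < 0"
  proof
    assume h: "r > L / \<mu> \<and> min L (lambda_min (C + B ** matrix_inv A ** transpose B)) > 0"
    show "l0 < 0"
    proof (cases "l1 = 0")
      case True then show ?thesis using P4 h by linarith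
    next
      case False
      then have "l0 \<le> - (\<mu> * (r - L / \<mu>)) / 2" using P12 by blast
      moreover have "\<mu> * (r - L / \<mu>) > 0" using h mu_pos by simp
      then have "- (\<mu> * (r - L / \<mu>)) / 2 < 0" by simp
      ultimately show ?thesis by (rule le_less_trans)
    qed
  qed
  show ?thesis using P12 P3 P4 P5 unfolding l0_def l1_def M_def by blast
qed


end
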